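(* Let $t(x_1,\dots,x_n)$ be a Łukasiewicz $\mu$-term and $\vec r\in[0,1]^n$. For each threshold modality $\mathbb P_{\rtimes r}$, namely $\mathbb P_{>0}$, $\mathbb P_{=1}$, $\mathbb P_{>r}$ and $\mathbb P_{\ge r}$ with $r\in(0,1)$, one has $(\mathbb P_{\rtimes r}t)(\vec r)=1$ if $t(\vec r)\rtimes r$ holds, and $(\mathbb P_{\rtimes r}t)(\vec r)=0$ otherwise (where $\rtimes r$ stands for $>0$, $=1$, $>r$, $\ge r$ respectively).
   Context: Łukasiewicz $\mu$-terms: $t::=x\mid\underline0\mid\underline1\mid r\,t\mid t\sqcup t\mid t\sqcap t\mid t\oplus t\mid t\odot t\mid\mu x.t\mid\nu x.t$, with $r\in[0,1]$ real ($\mu,\nu$ bind). Value at $\vec r\in[0,1]^n$: $x_i\mapsto r_i$, constants $0,1$, $r\,t\mapsto r\cdot t(\vec r)$, $\sqcup,\sqcap$ max/min, $t_1\oplus t_2\mapsto\min(t_1(\vec r)+t_2(\vec r),1)$, $t_1\odot t_2\mapsto\max(t_1(\vec r)+t_2(\vec r)-1,0)$, $\mu y.t$, $\nu y.t$ the least/greatest fixed points on $[0,1]$ of $r'\mapsto t(\vec r,r')$. $\underline r$ denotes $r\,\underline1$. Threshold modalities: $\mathbb P_{>0}t=\mu y.(y\oplus t)$, $\mathbb P_{=1}t=\nu y.(y\odot t)$, $\mathbb P_{>r}t=\mathbb P_{>0}(t\odot\underline{1-r})$, $\mathbb P_{\ge r}t=\mathbb P_{=1}(t\oplus\underline{1-r})$,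 for $r\in(0,1)$ and $y$ not occurring in $t$. *)

theory Defs
  imports Complex_Main
begin

datatype lterm =
    Var nat
  | Zero
  | One
  | Scale real lterm
  | Join lterm lterm
  | Meet lterm lterm
  | OPlus lterm lterm
  | OTimes lterm lterm
  | Mu nat lterm
  | Nu nat lterm

fun wf_lterm :: "lterm \<Rightarrow> bool" where
  "wf_lterm (Var x) = True"
| "wf_lterm Zero = True"
| "wf_lterm One = True"
| "wf_lterm (Scale r t) = (0 \<le> r \<and> r \<le> 1 \<and> wf_lterm t)"
| "wf_lterm (Join a b) = (wf_lterm a \<and> wf_lterm b)"
| "wf_lterm (Meet a b) = (wf_lterm a \<and> wf_lterm b)"
| "wf_lterm (OPlus a b) = (wf_lterm a \<and> wf_lterm b)"
| "wf_lterm (OTimes a b) = (wf_lterm a \<and> wf_lterm b)"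
| "wf_lterm (Mu x t) = wf_lterm t"
| "wf_lterm (Nu x t) = wf_lterm t"

fun vars :: "lterm \<Rightarrow> nat set" where
  "vars (Var x) = {x}"
| "vars Zero = {}"
| "vars One = {}"
| "vars (Scale r t) = vars t"
| "vars (Join a b) = vars a \<union> vars b"
| "vars (Meet a b) = vars a \<union> vars b"
| "vars (OPlus a b) = vars a \<union> vars b"
| "vars (OTimes a b) = vars a \<union> vars b"
| "vars (Mu x t) = insert x (vars t)"
| "vars (Nu x t) = insert x (vars t)"

definition lfp01 :: "(real \<Rightarrow> real) \<Rightarrow> real" where
  "lfp01 f = Inf {v \<in> {0..1}. f v = v}"

definition gfp01 :: "(real \<Rightarrow> real) \<Rightarrow> real" where
  "gfp01 f = Sup {v \<in> {0..1}. f v = v}"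

fun eval :: "lterm \<Rightarrow> (nat \<Rightarrow> real) \<Rightarrow> real" where
  "eval (Var x) \<rho> = \<rho> x"
| "eval Zero \<rho> = 0"
| "eval One \<rho> = 1"
| "eval (Scale r t) \<rho> = r * eval t \<rho>"
| "eval (Join a b) \<rho> = max (eval a \<rho>) (eval b \<rho>)"
| "eval (Meet a b) \<rho> = min (eval a \<rho>) (eval b \<rho>)"
| "eval (OPlus a b) \<rho> = min (eval a \<rho> + eval b \<rho>) 1"
| "eval (OTimes a b) \<rho> = max (eval a \<rho> + eval b \<rho> - 1) 0"
| "eval (Mu x t) \<rho> = lfp01 (\<lambda>v. eval t (\<rho>(x := v)))"
| "eval (Nu x t) \<rho> = gfp01 (\<lambda>v. eval t (\<rho>(x := v)))"

definition const :: "real \<Rightarrow> lterm" where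
  "const r = Scale r One"

text \<open>Threshold modalities; y is the bound variable, required not to occur in t.\<close>
definition P_gt0 :: "nat \<Rightarrow> lterm \<Rightarrow> lterm" where
  "P_gt0 y t = Mu y (OPlus (Var y) t)"

definition P_eq1 :: "nat \<Rightarrow> lterm \<Rightarrow> lterm" where
  "P_eq1 y t = Nu y (OTimes (Var y) t)"

definition P_gt :: "real \<Rightarrow> nat \<Rightarrow> lterm \<Rightarrow> lterm" where
  "P_gt r y t = P_gt0 y (OTimes t (const (1 - r)))"

definition P_ge :: "real \<Rightarrow> nat \<Rightarrow> lterm \<Rightarrow> lterm" where
  "P_ge r y t = P_eq1 y (OPlus t (const (1 - r)))"

end

theory Submission
  imports Defs
begin

lemma lfp01_char:
  assumes mono: "\<And>u v. 0 \<le> u \<Longrightarrow> u \<le> v \<Longrightarrow> v \<le> 1 \<Longrightarrow> f u \<le> f v"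
    and rng: "\<And>v. 0 \<le> v \<Longrightarrow> v \<le> 1 \<Longrightarrow> 0 \<le> f v \<and> f v \<le> 1"
  shows "f (lfp01 f) = lfp01 f \<and> 0 \<le> lfp01 f \<and> lfp01 f \<le> 1 \<and> (\<forall>w. 0 \<le> w \<and> w \<le> 1 \<and> f w \<le> w \<longrightarrow> lfp01 f \<le> w)"
proof -
  define P where "P = {v\<in>{0..1::real}. f v \<le> v}"
  define L where "L = Inf P"
  have 1: "1 \<in> P" using rng[of 1] by (auto simp: P_def)
  have bdd: "bdd_below P" by (auto simp: P_def bdd_below_def)
  have L0: "0 \<le> L" unfolding L_def using 1 by (intro cInf_greatest) (auto simp: P_def)
  have L1: "L \<le> 1" unfolding L_def using 1 bdd by (rule cInf_lower)
  have Lle: "\<And>v. v \<in> P \<Longrightarrow> L \<le> v" unfolding L_def using bdd by (simp add: cInf_lower)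
  have fL: "f L \<le> L" unfolding L_def
  proof (rule cInf_greatest)
    show "P \<noteq> {}" using 1 by auto
    fix v assume v: "v \<in> P"
    have "f L \<le> f v" using mono[of L v] L0 Lle[OF v] v by (auto simp: P_def L_def)
    also have "\<dots> \<le> v" using v by (auto simp: P_def)
    finally show "f (Inf P) \<le> v" by (simp add: L_def)
  qed
  have "f (f L) \<le> f L" using mono[OF _ fL] rng[OF L0 L1] L1 by auto
  hence "f L \<in> P" using rng[OF L0 L1] by (auto simp: P_def)
  hence "L \<le> f L" by (rule Lle)
  with fL have fixL: "f L = L" by simp
  define S where "S = {v\<in>{0..1::real}. f v = v}"
  have LS: "L \<in> S" using fixL L0 L1 by (auto simp: S_def)
  have "S \<subseteq> P" by (auto simp: S_def P_def)
  have "Inf S = L"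
  proof (rule antisym)
    show "Inf S \<le> L" using LS by (intro cInf_lower) (auto simp: S_def bdd_below_def)
    show "L \<le> Inf S" using LS \<open>S \<subseteq> P\<close> Lle by (intro cInf_greatest) auto
  qed
  hence eq: "lfp01 f = L" by (simp add: lfp01_def S_def)
  show ?thesis using eq L0 L1 Lle fixL by (auto simp: P_def)
qed

lemma gfp01_char:
  assumes mono: "\<And>u v. 0 \<le> u \<Longrightarrow> u \<le> v \<Longrightarrow> v \<le> 1 \<Longrightarrow> f u \<le> f v"
    and rng: "\<And>v. 0 \<le> v \<Longrightarrow> v \<le> 1 \<Longrightarrow> 0 \<le> f v \<and> f v \<le> 1"
  shows "f (gfp01 f) = gfp01 f \<and> 0 \<le> gfp01 f \<and> gfp01 f \<le> 1 \<and> (\<forall>w. 0 \<le> w \<and> w \<le> 1 \<and> w \<le> f w \<longrightarrow> w \<le> gfp01 f)"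
proof -
  define P where "P = {v\<in>{0..1::real}. v \<le> f v}"
  define L where "L = Sup P"
  have 1: "0 \<in> P" using rng[of 0] by (auto simp: P_def)
  have bdd: "bdd_above P" by (auto simp: P_def bdd_above_def intro!: exI[of _ 1])
  have L1: "L \<le> 1" unfolding L_def
  proof (rule cSup_least)
    show "P \<noteq> {}" using 1 by blast
  qed (auto simp: P_def)
  have L0: "0 \<le> L" unfolding L_def using 1 bdd by (rule cSup_upper)
  have Lle: "\<And>v. v \<in> P \<Longrightarrow> v \<le> L" unfolding L_def using bdd by (simp add: cSup_upper)
  have fL: "L \<le> f L" unfolding L_def
  proof (rule cSup_least)
    show "P \<noteq> {}" using 1 by auto
    fix v assume v: "v \<in> P"
    have "v \<le> f v" using v by (auto simp: P_def)
    also have "f v \<le> f L" using mono[of v L] L1 Lle[OF v] v by (auto simp: P_def L_def)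
    finally show "v \<le> f (Sup P)" by (simp add: L_def)
  qed
  have "f L \<le> f (f L)" using mono[OF L0 fL] rng[OF L0 L1] by auto
  hence "f L \<in> P" using rng[OF L0 L1] by (auto simp: P_def)
  hence "f L \<le> L" by (rule Lle)
  with fL have fixL: "f L = L" by simp
  define S where "S = {v\<in>{0..1::real}. f v = v}"
  have LS: "L \<in> S" using fixL L0 L1 by (auto simp: S_def)
  have "S \<subseteq> P" by (auto simp: S_def P_def)
  have "Sup S = L"
  proof (rule antisym)
    show "L \<le> Sup S" using LS by (intro cSup_upper) (auto simp: S_def bdd_above_def intro!: exI[of _ 1])
    show "Sup S \<le> L" using LS \<open>S \<subseteq> P\<close> Lle by (intro cSup_least) auto
  qed
  hence eq: "gfp01 f = L" by (simp add: gfp01_def S_def)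
  show ?thesis using eq L0 L1 Lle fixL by (auto simp: P_def)
qed

definition ok :: "(nat \<Rightarrow> real) \<Rightarrow> bool" where
  "ok \<rho> = (\<forall>i. 0 \<le> \<rho> i \<and> \<rho> i \<le> 1)"

lemma ok_upd: "ok \<rho> \<Longrightarrow> 0 \<le> v \<Longrightarrow> v \<le> (1::real) \<Longrightarrow> ok (\<rho>(x:=v))"
  by (auto simp: ok_def)

lemma eval_props:
  "wf_lterm t \<Longrightarrow> (\<forall>\<rho>. ok \<rho> \<longrightarrow> 0 \<le> eval t \<rho> \<and> eval t \<rho> \<le> 1) \<and>
     (\<forall>\<rho> \<rho>'. ok \<rho> \<and> ok \<rho>' \<and> (\<forall>i. \<rho> i \<le> \<rho>' i) \<longrightarrow> eval t \<rho> \<le> eval t \<rho>')"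
proof (induction t)
  case (Var x) then show ?case by (auto simp: ok_def)
next
  case Zero then show ?case by auto
next
  case One then show ?case by auto
next
  case (Scale r t) then show ?case
    by (auto intro: mult_left_mono mult_le_one)
next
  case (Join a b)
  then have A: "\<And>\<rho>. ok \<rho> \<Longrightarrow> 0 \<le> eval a \<rho> \<and> eval a \<rho> \<le> 1"
    "\<And>\<rho> \<rho>'. ok \<rho> \<Longrightarrow> ok \<rho>' \<Longrightarrow> (\<forall>i. \<rho> i \<le> \<rho>' i) \<Longrightarrow> eval a \<rho> \<le> eval a \<rho>'"
    "\<And>\<rho>. ok \<rho> \<Longrightarrow> 0 \<le> eval b \<rho> \<and> eval b \<rho> \<le> 1"
    "\<And>\<rho> \<rho>'. ok \<rho> \<Longrightarrow> ok \<rho>' \<Longrightarrow> (\<forall>i. \<rho> i \<le> \<rho>' i) \<Longrightarrow> eval b \<rho> \<le> eval b \<rho>'"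
    by auto
  show ?case
  proof (intro conjI allI impI)
    fix \<rho> assume "ok \<rho>" then show "0 \<le> eval (Join a b) \<rho>" "eval (Join a b) \<rho> \<le> 1"
      using A(1,3)[of \<rho>] by auto
  next
    fix \<rho> \<rho>' assume h: "ok \<rho> \<and> ok \<rho>' \<and> (\<forall>i. \<rho> i \<le> \<rho>' i)"
    then have "eval a \<rho> \<le> eval a \<rho>'" "eval b \<rho> \<le> eval b \<rho>'" using A(2,4) by auto
    then show "eval (Join a b) \<rho> \<le> eval (Join a b) \<rho>'" unfolding eval.simps by (rule max.mono)
  qed
next
  case (Meet a b)
  then have A: "\<And>\<rho>. ok \<rho> \<Longrightarrow> 0 \<le> eval a \<rho> \<and> eval a \<rho> \<le> 1"
    "\<And>\<rho> \<rho>'. ok \<rho> \<Longrightarrow> ok \<rho>' \<Longrightarrow> (\<forall>i. \<rho> i \<le> \<rho>' i) \<Longrightarrow> eval a \<rho> \<le> eval a \<rho>'"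
    "\<And>\<rho>. ok \<rho> \<Longrightarrow> 0 \<le> eval b \<rho> \<and> eval b \<rho> \<le> 1"
    "\<And>\<rho> \<rho>'. ok \<rho> \<Longrightarrow> ok \<rho>' \<Longrightarrow> (\<forall>i. \<rho> i \<le> \<rho>' i) \<Longrightarrow> eval b \<rho> \<le> eval b \<rho>'"
    by auto
  show ?case
  proof (intro conjI allI impI)
    fix \<rho> assume "ok \<rho>" then show "0 \<le> eval (Meet a b) \<rho>" "eval (Meet a b) \<rho> \<le> 1"
      using A(1,3)[of \<rho>] by auto
  next
    fix \<rho> \<rho>' assume h: "ok \<rho> \<and> ok \<rho>' \<and> (\<forall>i. \<rho> i \<le> \<rho>' i)"
    then have "eval a \<rho> \<le> eval a \<rho>'" "eval b \<rho> \<le> eval b \<rho>'" using A(2,4) by auto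
    then show "eval (Meet a b) \<rho> \<le> eval (Meet a b) \<rho>'" unfolding eval.simps by (rule min.mono)
  qed
next
  case (OPlus a b)
  then have A: "\<And>\<rho>. ok \<rho> \<Longrightarrow> 0 \<le> eval a \<rho> \<and> eval a \<rho> \<le> 1"
    "\<And>\<rho> \<rho>'. ok \<rho> \<Longrightarrow> ok \<rho>' \<Longrightarrow> (\<forall>i. \<rho> i \<le> \<rho>' i) \<Longrightarrow> eval a \<rho> \<le> eval a \<rho>'"
    "\<And>\<rho>. ok \<rho> \<Longrightarrow> 0 \<le> eval b \<rho> \<and> eval b \<rho> \<le> 1"
    "\<And>\<rho> \<rho>'. ok \<rho> \<Longrightarrow> ok \<rho>' \<Longrightarrow> (\<forall>i. \<rho> i \<le> \<rho>' i) \<Longrightarrow> eval b \<rho> \<le> eval b \<rho>'"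
    by auto
  show ?case
  proof (intro conjI allI impI)
    fix \<rho> assume "ok \<rho>" then show "0 \<le> eval (OPlus a b) \<rho>" "eval (OPlus a b) \<rho> \<le> 1"
      using A(1,3)[of \<rho>] by auto
  next
    fix \<rho> \<rho>' assume h: "ok \<rho> \<and> ok \<rho>' \<and> (\<forall>i. \<rho> i \<le> \<rho>' i)"
    then have "eval a \<rho> \<le> eval a \<rho>'" "eval b \<rho> \<le> eval b \<rho>'" using A(2,4) by auto
    then show "eval (OPlus a b) \<rho> \<le> eval (OPlus a b) \<rho>'" by simp
  qed
next
  case (OTimes a b)
  then have A: "\<And>\<rho>. ok \<rho> \<Longrightarrow> 0 \<le> eval a \<rho> \<and> eval a \<rho> \<le> 1"
    "\<And>\<rho> \<rho>'. ok \<rho> \<Longrightarrow> ok \<rho>' \<Longrightarrow> (\<forall>i. \<rho> i \<le> \<rho>' i) \<Longrightarrow> eval a \<rho> \<le> eval a \<rho>'"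
    "\<And>\<rho>. ok \<rho> \<Longrightarrow> 0 \<le> eval b \<rho> \<and> eval b \<rho> \<le> 1"
    "\<And>\<rho> \<rho>'. ok \<rho> \<Longrightarrow> ok \<rho>' \<Longrightarrow> (\<forall>i. \<rho> i \<le> \<rho>' i) \<Longrightarrow> eval b \<rho> \<le> eval b \<rho>'"
    by auto
  show ?case
  proof (intro conjI allI impI)
    fix \<rho> assume "ok \<rho>" then show "0 \<le> eval (OTimes a b) \<rho>" "eval (OTimes a b) \<rho> \<le> 1"
      using A(1,3)[of \<rho>] by auto
  next
    fix \<rho> \<rho>' assume h: "ok \<rho> \<and> ok \<rho>' \<and> (\<forall>i. \<rho> i \<le> \<rho>' i)"
    then have "eval a \<rho> \<le> eval a \<rho>'" "eval b \<rho> \<le> eval b \<rho>'" using A(2,4) by auto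
    then show "eval (OTimes a b) \<rho> \<le> eval (OTimes a b) \<rho>'" by simp
  qed
next
  case (Mu x t)
  then have IH1: "\<And>\<rho>. ok \<rho> \<Longrightarrow> 0 \<le> eval t \<rho> \<and> eval t \<rho> \<le> 1"
    and IH2: "\<And>\<rho> \<rho>'. ok \<rho> \<Longrightarrow> ok \<rho>' \<Longrightarrow> (\<forall>i. \<rho> i \<le> \<rho>' i) \<Longrightarrow> eval t \<rho> \<le> eval t \<rho>'"
    by auto
  have ch: "eval t (\<rho>(x := lfp01 (\<lambda>v. eval t (\<rho>(x := v))))) = lfp01 (\<lambda>v. eval t (\<rho>(x := v))) \<and>
     0 \<le> lfp01 (\<lambda>v. eval t (\<rho>(x := v))) \<and> lfp01 (\<lambda>v. eval t (\<rho>(x := v))) \<le> 1 \<and>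
     (\<forall>w. 0 \<le> w \<and> w \<le> 1 \<and> eval t (\<rho>(x := w)) \<le> w \<longrightarrow> lfp01 (\<lambda>v. eval t (\<rho>(x := v))) \<le> w)"
    if "ok \<rho>" for \<rho>
    proof (rule lfp01_char)
    fix u v :: real assume "0 \<le> u" "u \<le> v" "v \<le> 1"
    then show "eval t (\<rho>(x := u)) \<le> eval t (\<rho>(x := v))"
      by (intro IH2) (auto intro: ok_upd that)
  next
    fix v :: real assume "0 \<le> v" "v \<le> 1"
    then show "0 \<le> eval t (\<rho>(x := v)) \<and> eval t (\<rho>(x := v)) \<le> 1"
      by (intro IH1) (auto intro: ok_upd that)
  qed
  show ?case
  proof (intro conjI allI impI)
    fix \<rho> assume "ok \<rho>" then show "0 \<le> eval (Mu x t) \<rho>" "eval (Mu x t) \<rho> \<le> 1"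
      using ch by auto
  next
    fix \<rho> \<rho>' assume a: "ok \<rho> \<and> ok \<rho>' \<and> (\<forall>i. \<rho> i \<le> \<rho>' i)"
    let ?w = "lfp01 (\<lambda>v. eval t (\<rho>'(x := v)))"
    have w: "0 \<le> ?w" "?w \<le> 1" "eval t (\<rho>'(x := ?w)) = ?w" using ch a by auto
    have "eval t (\<rho>(x := ?w)) \<le> eval t (\<rho>'(x := ?w))"
      using a w by (intro IH2) (auto intro: ok_upd)
    then have "eval t (\<rho>(x := ?w)) \<le> ?w" using w by simp
    then show "eval (Mu x t) \<rho> \<le> eval (Mu x t) \<rho>'" using ch a w by auto
  qed
next
  case (Nu x t)
  then have IH1: "\<And>\<rho>. ok \<rho> \<Longrightarrow> 0 \<le> eval t \<rho> \<and> eval t \<rho> \<le> 1"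
    and IH2: "\<And>\<rho> \<rho>'. ok \<rho> \<Longrightarrow> ok \<rho>' \<Longrightarrow> (\<forall>i. \<rho> i \<le> \<rho>' i) \<Longrightarrow> eval t \<rho> \<le> eval t \<rho>'"
    by auto
  have ch: "eval t (\<rho>(x := gfp01 (\<lambda>v. eval t (\<rho>(x := v))))) = gfp01 (\<lambda>v. eval t (\<rho>(x := v))) \<and>
     0 \<le> gfp01 (\<lambda>v. eval t (\<rho>(x := v))) \<and> gfp01 (\<lambda>v. eval t (\<rho>(x := v))) \<le> 1 \<and>
     (\<forall>w. 0 \<le> w \<and> w \<le> 1 \<and> w \<le> eval t (\<rho>(x := w)) \<longrightarrow> w \<le> gfp01 (\<lambda>v. eval t (\<rho>(x := v))))"
    if "ok \<rho>" for \<rho>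
    proof (rule gfp01_char)
    fix u v :: real assume "0 \<le> u" "u \<le> v" "v \<le> 1"
    then show "eval t (\<rho>(x := u)) \<le> eval t (\<rho>(x := v))"
      by (intro IH2) (auto intro: ok_upd that)
  next
    fix v :: real assume "0 \<le> v" "v \<le> 1"
    then show "0 \<le> eval t (\<rho>(x := v)) \<and> eval t (\<rho>(x := v)) \<le> 1"
      by (intro IH1) (auto intro: ok_upd that)
  qed
  show ?case
  proof (intro conjI allI impI)
    fix \<rho> assume "ok \<rho>" then show "0 \<le> eval (Nu x t) \<rho>" "eval (Nu x t) \<rho> \<le> 1"
      using ch by auto
  next
    fix \<rho> \<rho>' assume a: "ok \<rho> \<and> ok \<rho>' \<and> (\<forall>i. \<rho> i \<le> \<rho>' i)"
    let ?w = "gfp01 (\<lambda>v. eval t (\<rho>(x := v)))"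
    have w: "0 \<le> ?w" "?w \<le> 1" "eval t (\<rho>(x := ?w)) = ?w" using ch a by auto
    have "eval t (\<rho>(x := ?w)) \<le> eval t (\<rho>'(x := ?w))"
      using a w by (intro IH2) (auto intro: ok_upd)
    then have "?w \<le> eval t (\<rho>'(x := ?w))" using w by simp
    then show "eval (Nu x t) \<rho> \<le> eval (Nu x t) \<rho>'" using ch a w by auto
  qed
qed


lemma eval_indep: "y \<notin> vars t \<Longrightarrow> eval t (\<rho>(y := v)) = eval t \<rho>"
proof (induction t arbitrary: \<rho>)
  case (Mu x t)
  then have "x \<noteq> y" by auto
  then have "\<And>w. \<rho>(y := v, x := w) = \<rho>(x := w, y := v)" by (simp add: fun_upd_twist)
  moreover have "\<And>w. eval t (\<rho>(x := w, y := v)) = eval t (\<rho>(x := w))" using Mu.IH[of "\<rho>(x := _)"] Mu.prems by (simp del: fun_upd_apply)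
  ultimately show ?case by (simp del: fun_upd_apply)
next
  case (Nu x t)
  then have "x \<noteq> y" by auto
  then have "\<And>w. \<rho>(y := v, x := w) = \<rho>(x := w, y := v)" by (simp add: fun_upd_twist)
  moreover have "\<And>w. eval t (\<rho>(x := w, y := v)) = eval t (\<rho>(x := w))" using Nu.IH[of "\<rho>(x := _)"] Nu.prems by (simp del: fun_upd_apply)
  ultimately show ?case by (simp del: fun_upd_apply)
qed auto

lemma gt0_lem:
  assumes "wf_lterm t" "ok \<rho>" "y \<notin> vars t"
  shows "eval (P_gt0 y t) \<rho> = (if eval t \<rho> > 0 then 1 else 0)"
proof -
  define a where "a = eval t \<rho>"
  have a: "0 \<le> a" "a \<le> 1" using eval_props[OF assms(1)] assms(2) by (auto simp: a_def)
  have e: "eval (P_gt0 y t) \<rho> = Inf {v \<in> {0..1::real}. min (v + a) 1 = v}"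
    by (simp add: P_gt0_def lfp01_def eval_indep[OF assms(3)] a_def)
  show ?thesis
  proof (cases "a > 0")
    case True
    then have "{v \<in> {0..1::real}. min (v + a) 1 = v} = {1}" by (auto simp: min_def)
    then show ?thesis using e True by (simp add: a_def)
  next
    case False
    then have "{v \<in> {0..1::real}. min (v + a) 1 = v} = {0..1}" using a by (auto simp: min_def)
    then show ?thesis using e False by (simp add: a_def)
  qed
qed

lemma eq1_lem:
  assumes "wf_lterm t" "ok \<rho>" "y \<notin> vars t"
  shows "eval (P_eq1 y t) \<rho> = (if eval t \<rho> = 1 then 1 else 0)"
proof -
  define a where "a = eval t \<rho>"
  have a: "0 \<le> a" "a \<le> 1" using eval_props[OF assms(1)] assms(2) by (auto simp: a_def)
  have e: "eval (P_eq1 y t) \<rho> = Sup {v \<in> {0..1::real}. max (v + a - 1) 0 = v}"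
    by (simp add: P_eq1_def gfp01_def eval_indep[OF assms(3)] a_def)
  show ?thesis
  proof (cases "a = 1")
    case True
    then have "{v \<in> {0..1::real}. max (v + a - 1) 0 = v} = {0..1}" by (auto simp: max_def)
    then show ?thesis using e True by (simp add: a_def)
  next
    case False
    then have "{v \<in> {0..1::real}. max (v + a - 1) 0 = v} = {0}" using a by (auto simp: max_def)
    then show ?thesis using e False by (simp add: a_def)
  qed
qed

theorem mainTheorem8:
  fixes t :: lterm and \<rho> :: "nat \<Rightarrow> real" and y :: nat and r :: real
  assumes "wf_lterm t"
    and "\<forall>i. 0 \<le> \<rho> i \<and> \<rho> i \<le> 1"
    and "y \<notin> vars t"
  shows "eval (P_gt0 y t) \<rho> = (if eval t \<rho> > 0 then 1 else 0)
       \<and> eval (P_eq1 y t) \<rho> = (if eval t \<rho> = 1 then 1 else 0)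
       \<and> (0 < r \<and> r < 1 \<longrightarrow>
            eval (P_gt r y t) \<rho> = (if eval t \<rho> > r then 1 else 0)
          \<and> eval (P_ge r y t) \<rho> = (if eval t \<rho> \<ge> r then 1 else 0))"
proof -
  have ok: "ok \<rho>" using assms(2) by (simp add: ok_def)
  have A: "eval (P_gt0 y t) \<rho> = (if eval t \<rho> > 0 then 1 else 0)"
    using gt0_lem[OF assms(1) ok assms(3)] .
  have B: "eval (P_eq1 y t) \<rho> = (if eval t \<rho> = 1 then 1 else 0)"
    using eq1_lem[OF assms(1) ok assms(3)] .
  have C: "eval (P_gt r y t) \<rho> = (if eval t \<rho> > r then 1 else 0)
          \<and> eval (P_ge r y t) \<rho> = (if eval t \<rho> \<ge> r then 1 else 0)" if r: "0 < r" "r < 1"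
  proof -
    have w1: "wf_lterm (OTimes t (const (1 - r)))" using assms(1) r by (simp add: const_def)
    have w2: "wf_lterm (OPlus t (const (1 - r)))" using assms(1) r by (simp add: const_def)
    have v1: "y \<notin> vars (OTimes t (const (1 - r)))" using assms(3) by (simp add: const_def)
    have v2: "y \<notin> vars (OPlus t (const (1 - r)))" using assms(3) by (simp add: const_def)
    have g: "eval (P_gt r y t) \<rho> = (if eval (OTimes t (const (1 - r))) \<rho> > 0 then 1 else 0)"
      unfolding P_gt_def by (rule gt0_lem[OF w1 ok v1])
    have h: "eval (P_ge r y t) \<rho> = (if eval (OPlus t (const (1 - r))) \<rho> = 1 then 1 else 0)"
      unfolding P_ge_def by (rule eq1_lem[OF w2 ok v2])
    have "(eval (OTimes t (const (1 - r))) \<rho> > 0) = (eval t \<rho> > r)"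
      by (simp add: const_def max_def)
    moreover have "(eval (OPlus t (const (1 - r))) \<rho> = 1) = (eval t \<rho> \<ge> r)"
      by (auto simp: const_def min_def)
    ultimately show ?thesis using g h by simp
  qed
  show ?thesis using A B C by blast
qed

end
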